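(* Let $P(s,h)=\{p_1,\dots,p_m\}$ and $P(h,t)=\{p'_1,\dots,p'_n\}$ be skyline path sets with $p_i=(w_i,c_i)$, $p'_j=(w'_j,c'_j)$, each sorted in weight-increasing order, and let $p_i^j=(w_i+w'_j,c_i+c'_j)$. Fix $i,j$ and let $P_1=\{p_k^l: k<i,\ l<j\}$ and $P_2=\{p_k^l: k>i,\ l>j\}$. Then no path in $P_1\cup P_2$ dominates $p_i^j$.
   Context: A path with value $(w,c)$ dominates a path with value $(w',c')$ if $w\le w'$, $c\le c'$, and at least one inequality is strict. A skyline path set is a set of paths no one of which dominates another (so, in two dimensions, when sorted by increasing weight the costs are non-increasing). Concatenation adds weights and costs. *)

theory Defs
  imports Complex_Main
begin

text \<open>A path value is a pair (weight, cost).\<close>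
type_synonym pval = "real \<times> real"

definition dominates :: "pval \<Rightarrow> pval \<Rightarrow> bool" where
  "dominates p q \<longleftrightarrow> fst p \<le> fst q \<and> snd p \<le> snd q \<and> (fst p < fst q \<or> snd p < snd q)"

definition pconcat :: "pval \<Rightarrow> pval \<Rightarrow> pval" where
  "pconcat p q = (fst p + fst q, snd p + snd q)"

definition skyline :: "pval list \<Rightarrow> bool" where
  "skyline P \<longleftrightarrow> (\<forall>a < length P. \<forall>b < length P. \<not> dominates (P ! a) (P ! b))"

end

theory Submission
  imports Defs
begin

lemma sk: assumes "skyline P" "a < length P" "b < length P"
  shows "\<not> dominates (P!a) (P!b)"
  using assms unfolding skyline_def by blast

lemma srt: assumes "sorted (map fst P)" "a \<le> b" "b < length P"
  shows "fst (P!a) \<le> fst (P!b)"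
  using assms by (metis (no_types, lifting) le_less_trans length_map nth_map sorted_nth_mono)

lemma key:
  fixes a b c d e f g h :: real
  shows "\<not> (a \<le> b \<and> c \<le> d \<and> (a < b \<or> c < d)) \<Longrightarrow>
    \<not> (b \<le> a \<and> d \<le> c \<and> (b < a \<or> d < c)) \<Longrightarrow>
    \<not> (e \<le> f \<and> g \<le> h \<and> (e < f \<or> g < h)) \<Longrightarrow>
    \<not> (f \<le> e \<and> h \<le> g \<and> (f < e \<or> h < g)) \<Longrightarrow>
    (a \<le> b \<and> e \<le> f) \<or> (b \<le> a \<and> f \<le> e) \<Longrightarrow>
    \<not> (a + e \<le> b + f \<and> c + g \<le> d + h \<and> (a + e < b + f \<or> c + g < d + h))"
  by smt

theorem mainTheorem3:
  fixes P Q :: "pval list" and i j :: nat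
  assumes "skyline P" and "skyline Q"
    and "sorted (map fst P)" and "sorted (map fst Q)"
    and "i < length P" and "j < length Q"
  shows "\<forall>p \<in> {pconcat (P ! k) (Q ! l) | k l. k < i \<and> l < j}
              \<union> {pconcat (P ! k) (Q ! l) | k l. i < k \<and> k < length P \<and> j < l \<and> l < length Q}.
           \<not> dominates p (pconcat (P ! i) (Q ! j))"
proof
  fix p assume "p \<in> {pconcat (P ! k) (Q ! l) | k l. k < i \<and> l < j}
              \<union> {pconcat (P ! k) (Q ! l) | k l. i < k \<and> k < length P \<and> j < l \<and> l < length Q}"
  then obtain k l where p: "p = pconcat (P ! k) (Q ! l)" and kl: "k < length P" "l < length Q"
    and c: "(k < i \<and> l < j) \<or> (i < k \<and> j < l)" using assms(5,6) by auto
  have a1: "\<not> dominates (P!k) (P!i)" "\<not> dominates (P!i) (P!k)"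
    using sk[OF assms(1)] kl assms(5) by auto
  have a2: "\<not> dominates (Q!l) (Q!j)" "\<not> dominates (Q!j) (Q!l)"
    using sk[OF assms(2)] kl assms(6) by auto
  show "\<not> dominates p (pconcat (P ! i) (Q ! j))"
  proof (cases "k < i \<and> l < j")
    case True
    have "fst (P!k) \<le> fst (P!i)" "fst (Q!l) \<le> fst (Q!j)"
      using True srt[OF assms(3)] srt[OF assms(4)] assms(5,6) by auto
    then show ?thesis using a1 a2 key[of "fst (P!k)" "fst (P!i)" "snd (P!k)" "snd (P!i)" "fst (Q!l)" "fst (Q!j)" "snd (Q!l)" "snd (Q!j)"]
      unfolding p dominates_def pconcat_def by (simp only: fst_conv snd_conv) blast
  next
    case False
    hence "i < k \<and> j < l" using c by auto
    hence "fst (P!i) \<le> fst (P!k)" "fst (Q!j) \<le> fst (Q!l)"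
      using srt[OF assms(3)] srt[OF assms(4)] kl by auto
    then show ?thesis using a1 a2 key[of "fst (P!k)" "fst (P!i)" "snd (P!k)" "snd (P!i)" "fst (Q!l)" "fst (Q!j)" "snd (Q!l)" "snd (Q!j)"]
      unfolding p dominates_def pconcat_def by (simp only: fst_conv snd_conv) blast
  qed
qed

end
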